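(* Let $(R,\mathfrak{m})$ be a local perinormal domain. If $S$ is an integral overring of $R$ such that the induced map $\operatorname{Spec} S \to \operatorname{Spec} R$ is a bijection, then $S = R$.
   Context: All rings are commutative with identity; "local" means having a unique maximal ideal; an overring of a domain $R$ is a ring between $R$ and its fraction field. A ring extension $A \subseteq B$ satisfies going-down if whenever $\mathfrak{p} \subset \mathfrak{q}$ are primes of $A$ and $Q$ is a prime of $B$ with $Q \cap A = \mathfrak{q}$, there is a prime $P \subseteq Q$ of $B$ with $P \cap A = \mathfrak{p}$. A domain $R$ is perinormal if every local overring $S$ of $R$ such that $R \subseteq S$ satisfies going-down is a localization of $R$. *)

theory Defs
  imports Main
begin

text \<open>Convention: every domain is realised as a subring of an ambient field of type 'k
  (a domain is isomorphic to a subring of its fraction field); its fraction field is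
  realised as the set of quotients inside 'k.\<close>

definition subring :: "'k::field set \<Rightarrow> bool" where
  "subring A \<longleftrightarrow> 0 \<in> A \<and> 1 \<in> A \<and>
     (\<forall>x\<in>A. \<forall>y\<in>A. x + y \<in> A \<and> x - y \<in> A \<and> x * y \<in> A)"

definition frac :: "'k::field set \<Rightarrow> 'k set" where
  "frac R = {a / b | a b. a \<in> R \<and> b \<in> R \<and> b \<noteq> 0}"

definition overring :: "'k::field set \<Rightarrow> 'k set \<Rightarrow> bool" where
  "overring R S \<longleftrightarrow> subring S \<and> R \<subseteq> S \<and> S \<subseteq> frac R"

definition is_ideal :: "'k::field set \<Rightarrow> 'k set \<Rightarrow> bool" where
  "is_ideal A I \<longleftrightarrow> I \<subseteq> A \<and> 0 \<in> I \<and>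
     (\<forall>x\<in>I. \<forall>y\<in>I. x + y \<in> I) \<and> (\<forall>a\<in>A. \<forall>x\<in>I. a * x \<in> I)"

definition is_prime :: "'k::field set \<Rightarrow> 'k set \<Rightarrow> bool" where
  "is_prime A P \<longleftrightarrow> is_ideal A P \<and> P \<noteq> A \<and>
     (\<forall>a\<in>A. \<forall>b\<in>A. a * b \<in> P \<longrightarrow> a \<in> P \<or> b \<in> P)"

definition Spec :: "'k::field set \<Rightarrow> 'k set set" where
  "Spec A = {P. is_prime A P}"

definition is_maximal :: "'k::field set \<Rightarrow> 'k set \<Rightarrow> bool" where
  "is_maximal A M \<longleftrightarrow> is_ideal A M \<and> M \<noteq> A \<and>
     (\<forall>I. is_ideal A I \<and> M \<subseteq> I \<longrightarrow> I = M \<or> I = A)"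

definition local_ring :: "'k::field set \<Rightarrow> bool" where
  "local_ring A \<longleftrightarrow> (\<exists>!M. is_maximal A M)"

definition going_down :: "'k::field set \<Rightarrow> 'k set \<Rightarrow> bool" where
  "going_down A B \<longleftrightarrow>
     (\<forall>p q Q. is_prime A p \<and> is_prime A q \<and> p \<subseteq> q \<and> is_prime B Q \<and> Q \<inter> A = q \<longrightarrow>
        (\<exists>P. is_prime B P \<and> P \<subseteq> Q \<and> P \<inter> A = p))"

definition is_localization :: "'k::field set \<Rightarrow> 'k set \<Rightarrow> bool" where
  "is_localization R S \<longleftrightarrow> (\<exists>T. T \<subseteq> R \<and> 1 \<in> T \<and> 0 \<notin> T \<and>
      (\<forall>x\<in>T. \<forall>y\<in>T. x * y \<in> T) \<and> S = {r / t | r t. r \<in> R \<and> t \<in> T})"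

definition perinormal :: "'k::field set \<Rightarrow> bool" where
  "perinormal R \<longleftrightarrow> (\<forall>S. overring R S \<and> local_ring S \<and> going_down R S \<longrightarrow> is_localization R S)"

definition integral_over :: "'k::field set \<Rightarrow> 'k set \<Rightarrow> bool" where
  "integral_over R S \<longleftrightarrow> (\<forall>s\<in>S. \<exists>n c. (\<forall>i<n. c i \<in> R) \<and> s ^ n + (\<Sum>i<n. c i * s ^ i) = 0)"

end

theory Submission
  imports Defs
begin


lemma sr_neg: "subring A \<Longrightarrow> x \<in> A \<Longrightarrow> - x \<in> A"
  unfolding subring_def by (metis diff_0)
lemma sr_add: "subring A \<Longrightarrow> x \<in> A \<Longrightarrow> y \<in> A \<Longrightarrow> x + y \<in> A"
  unfolding subring_def by blast
lemma sr_mult: "subring A \<Longrightarrow> x \<in> A \<Longrightarrow> y \<in> A \<Longrightarrow> x * y \<in> A"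
  unfolding subring_def by blast
lemma sr_diff: "subring A \<Longrightarrow> x \<in> A \<Longrightarrow> y \<in> A \<Longrightarrow> x - y \<in> A"
  unfolding subring_def by blast
lemma sr_0: "subring A \<Longrightarrow> 0 \<in> A" unfolding subring_def by blast
lemma sr_1: "subring A \<Longrightarrow> 1 \<in> A" unfolding subring_def by blast
lemma sr_pow: "subring A \<Longrightarrow> x \<in> A \<Longrightarrow> x ^ n \<in> A"
  by (induction n) (auto intro: sr_1 sr_mult)
lemma sr_sum: "subring A \<Longrightarrow> (\<And>i. i < (n::nat) \<Longrightarrow> f i \<in> A) \<Longrightarrow> (\<Sum>i<n. f i) \<in> A"
  by (induction n) (auto intro: sr_0 sr_add)

lemma id_sub: "is_ideal A I \<Longrightarrow> x \<in> I \<Longrightarrow> x \<in> A" unfolding is_ideal_def by blast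
lemma id_add: "is_ideal A I \<Longrightarrow> x \<in> I \<Longrightarrow> y \<in> I \<Longrightarrow> x + y \<in> I" unfolding is_ideal_def by blast
lemma id_0: "is_ideal A I \<Longrightarrow> 0 \<in> I" unfolding is_ideal_def by blast
lemma id_multl: "is_ideal A I \<Longrightarrow> a \<in> A \<Longrightarrow> x \<in> I \<Longrightarrow> a * x \<in> I" unfolding is_ideal_def by blast
lemma id_multr: "is_ideal A I \<Longrightarrow> a \<in> A \<Longrightarrow> x \<in> I \<Longrightarrow> x * a \<in> I"
  by (metis id_multl mult.commute)
lemma id_neg: "subring A \<Longrightarrow> is_ideal A I \<Longrightarrow> x \<in> I \<Longrightarrow> - x \<in> I"
  using id_multl[of A I "-1" x] sr_neg[of A 1] sr_1[of A] by simp
lemma id_diff: "subring A \<Longrightarrow> is_ideal A I \<Longrightarrow> x \<in> I \<Longrightarrow> y \<in> I \<Longrightarrow> x - y \<in> I"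
  using id_add id_neg by (metis diff_conv_add_uminus)
lemma id_sum: "is_ideal A I \<Longrightarrow> (\<And>i. i < (n::nat) \<Longrightarrow> f i \<in> I) \<Longrightarrow> (\<Sum>i<n. f i) \<in> I"
  by (induction n) (auto intro: id_0 id_add)
lemma id_one: "is_ideal A I \<Longrightarrow> 1 \<in> I \<Longrightarrow> I = A"
  using id_multl[of A I _ 1] id_sub by force
lemma pr_ideal: "is_prime A P \<Longrightarrow> is_ideal A P" unfolding is_prime_def by blast
lemma pr_one: "is_prime A P \<Longrightarrow> 1 \<notin> P" unfolding is_prime_def using id_one by blast
lemma pr_pow: "is_prime A P \<Longrightarrow> subring A \<Longrightarrow> t \<in> A \<Longrightarrow> t ^ n \<in> P \<Longrightarrow> t \<in> P"
proof (induction n)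
  case 0 then show ?case using pr_one by auto
next
  case (Suc n)
  then have "t \<in> P \<or> t ^ n \<in> P" unfolding is_prime_def using sr_pow[of A t n] by auto
  then show ?case using Suc by blast
qed

lemma pow_diff_ideal:
  assumes "subring A" "is_ideal A I" "t \<in> A" "y \<in> A" "t - y \<in> I"
  shows "t ^ k - y ^ k \<in> I"
proof (induction k)
  case 0 then show ?case using id_0[OF assms(2)] by simp
next
  case (Suc k)
  have "t ^ Suc k - y ^ Suc k = t * (t ^ k - y ^ k) + y ^ k * (t - y)"
    by (simp add: algebra_simps)
  also have "\<dots> \<in> I"
    using Suc assms by (intro id_add id_multl[OF assms(2)] sr_pow) auto
  finally show ?case .
qed



lemma key:
  assumes S: "subring S" and R: "subring R" and RS: "R \<subseteq> S" and I: "is_ideal S I"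
    and q: "is_prime R q" and IR: "I \<inter> R \<subseteq> q" and a: "a \<in> q" and s: "s \<in> S"
    and x: "x \<in> I" and tR: "x + a * s \<in> R"
    and c: "\<forall>i<n. c i \<in> R" and eq: "s ^ n + (\<Sum>i<n. c i * s ^ i) = 0"
  shows "x + a * s \<in> q"
proof -
  define t where "t = x + a * s"
  define y where "y = a * s"
  have qR: "is_ideal R q" using q pr_ideal by blast
  have aR: "a \<in> R" using id_sub[OF qR a] .
  have aS: "a \<in> S" using aR RS by blast
  have tR': "t \<in> R" using tR t_def by simp
  have tS: "t \<in> S" using tR' RS by blast
  have yS: "y \<in> S" unfolding y_def using aS s sr_mult[OF S] by blast
  have cS: "\<forall>i<n. c i \<in> S" using c RS by blast
  have h0: "y ^ n + (\<Sum>i<n. c i * a ^ (n - i) * y ^ i) = 0"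
  proof -
    have "a ^ n * (s ^ n + (\<Sum>i<n. c i * s ^ i)) = 0" using eq by simp
    moreover have "a ^ n * (s ^ n + (\<Sum>i<n. c i * s ^ i)) = y ^ n + (\<Sum>i<n. c i * a ^ (n - i) * y ^ i)"
    proof -
      have "\<And>i. i \<in> {..<n} \<Longrightarrow> a ^ n * (c i * s ^ i) = c i * a ^ (n - i) * y ^ i"
      proof -
        fix i assume "i \<in> {..<n}"
        then have "a ^ n = a ^ (n - i) * a ^ i" by (simp add: power_add[symmetric])
        then show "a ^ n * (c i * s ^ i) = c i * a ^ (n - i) * y ^ i"
          unfolding y_def by (simp add: power_mult_distrib algebra_simps)
      qed
      then have "a ^ n * (\<Sum>i<n. c i * s ^ i) = (\<Sum>i<n. c i * a ^ (n - i) * y ^ i)"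
        unfolding sum_distrib_left by (rule sum.cong[OF refl])
      then show ?thesis unfolding y_def by (simp add: distrib_left power_mult_distrib)
    qed
    ultimately show ?thesis by simp
  qed
  have ty: "t - y \<in> I" unfolding t_def y_def using x by simp
  define E where "E = t ^ n + (\<Sum>i<n. c i * a ^ (n - i) * t ^ i)"
  have "E - 0 = (t ^ n - y ^ n) + (\<Sum>i<n. c i * a ^ (n - i) * (t ^ i - y ^ i))"
    unfolding E_def h0[symmetric] by (simp add: algebra_simps sum_subtractf)
  also have "\<dots> \<in> I"
  proof (rule id_add[OF I])
    show "t ^ n - y ^ n \<in> I" using pow_diff_ideal[OF S I tS yS ty] .
    show "(\<Sum>i<n. c i * a ^ (n - i) * (t ^ i - y ^ i)) \<in> I"
    proof (rule id_sum[OF I])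
      fix i assume "i < n"
      then show "c i * a ^ (n - i) * (t ^ i - y ^ i) \<in> I"
        using pow_diff_ideal[OF S I tS yS ty] cS aS sr_pow[OF S] sr_mult[OF S]
        by (intro id_multl[OF I]) auto
    qed
  qed
  finally have EI: "E \<in> I" by simp
  have ER: "E \<in> R" unfolding E_def using tR' aR c
    by (intro sr_add[OF R] sr_pow[OF R] sr_sum[OF R] sr_mult[OF R]) auto
  have Eq: "E \<in> q" using EI ER IR by blast
  have Sq: "(\<Sum>i<n. c i * a ^ (n - i) * t ^ i) \<in> q"
  proof (rule id_sum[OF qR])
    fix i assume i: "i < n"
    then have "a ^ (n - i) = a * a ^ (n - i - 1)" by (metis Suc_diff_Suc diff_Suc_1 power_Suc zero_less_diff diff_diff_left Suc_eq_plus1 ) 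
    then have "c i * a ^ (n - i) * t ^ i = a * (c i * a ^ (n - i - 1) * t ^ i)" by simp
    also have "\<dots> \<in> q" using a c i aR tR'
      by (intro id_multr[OF qR, of _ a, simplified mult.commute] sr_mult[OF R] sr_pow[OF R])
         (auto simp: mult.commute)
    finally show "c i * a ^ (n - i) * t ^ i \<in> q" .
  qed
  have "t ^ n = E - (\<Sum>i<n. c i * a ^ (n - i) * t ^ i)" unfolding E_def by simp
  also have "\<dots> \<in> q" using id_diff[OF R qR Eq Sq] .
  finally have "t ^ n \<in> q" .
  then have "t \<in> q" using pr_pow[OF q R tR'] by blast
  then show ?thesis unfolding t_def .
qed



definition maxdisj :: "'k::field set \<Rightarrow> 'k set \<Rightarrow> 'k set \<Rightarrow> 'k set \<Rightarrow> bool" where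
  "maxdisj A J U Q \<longleftrightarrow> is_ideal A Q \<and> J \<subseteq> Q \<and> Q \<inter> U = {} \<and>
     (\<forall>I. is_ideal A I \<and> Q \<subseteq> I \<and> I \<inter> U = {} \<longrightarrow> I = Q)"

lemma zorn_ideal:
  assumes J: "is_ideal A J" and JU: "J \<inter> U = {}"
  shows "\<exists>Q. maxdisj A J U Q"
proof -
  define F where "F = {I. is_ideal A I \<and> J \<subseteq> I \<and> I \<inter> U = {}}"
  have "\<forall>C\<in>chains F. \<exists>V\<in>F. \<forall>X\<in>C. X \<subseteq> V"
  proof
    fix C assume C: "C \<in> chains F"
    show "\<exists>V\<in>F. \<forall>X\<in>C. X \<subseteq> V"
    proof (cases "C = {}")
      case True then show ?thesis using J JU unfolding F_def by auto
    next
      case False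
      have CF: "C \<subseteq> F" and ch: "\<forall>X\<in>C. \<forall>Y\<in>C. X \<subseteq> Y \<or> Y \<subseteq> X"
        using C unfolding chains_def chain_subset_def by auto
      have "\<Union>C \<in> F"
        unfolding F_def is_ideal_def
      proof (intro CollectI conjI ballI)
        show "\<Union>C \<subseteq> A" using CF unfolding F_def is_ideal_def by blast
        show "0 \<in> \<Union>C" using CF False unfolding F_def is_ideal_def by blast
        show "J \<subseteq> \<Union>C" using CF False unfolding F_def by blast
        show "\<Union>C \<inter> U = {}" using CF unfolding F_def by blast
        fix x y assume x: "x \<in> \<Union>C" and y: "y \<in> \<Union>C"
        then obtain X Y where X: "X \<in> C" "x \<in> X" and Y: "Y \<in> C" "y \<in> Y" by blast
        then have "x \<in> X \<and> y \<in> X \<or> x \<in> Y \<and> y \<in> Y" using ch by blast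
        then show "x + y \<in> \<Union>C" using X Y CF unfolding F_def is_ideal_def by blast
      next
        fix a x assume "a \<in> A" "x \<in> \<Union>C"
        then show "a * x \<in> \<Union>C" using CF unfolding F_def is_ideal_def by blast
      qed
      then show ?thesis by blast
    qed
  qed
  from Zorn_Lemma2[OF this] obtain M where "M \<in> F" "\<forall>X\<in>F. M \<subseteq> X \<longrightarrow> X = M" by blast
  then have "maxdisj A J U M" unfolding maxdisj_def F_def by blast
  then show ?thesis by blast
qed

definition addid :: "'k::field set \<Rightarrow> 'k set \<Rightarrow> 'k \<Rightarrow> 'k set" where
  "addid A Q a = {x + a * s | x s. x \<in> Q \<and> s \<in> A}"

lemma addid_ideal:
  assumes A: "subring A" and Q: "is_ideal A Q" and a: "a \<in> A"
  shows "is_ideal A (addid A Q a)" "Q \<subseteq> addid A Q a" "a \<in> addid A Q a"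
proof -
  show "is_ideal A (addid A Q a)" unfolding is_ideal_def addid_def
  proof (intro conjI ballI subsetI)
    fix z assume "z \<in> {x + a * s | x s. x \<in> Q \<and> s \<in> A}"
    then show "z \<in> A" using id_sub[OF Q] a by (auto intro: sr_add[OF A] sr_mult[OF A])
  next
    show "0 \<in> {x + a * s | x s. x \<in> Q \<and> s \<in> A}" using id_0[OF Q] sr_0[OF A]
      by (metis (mono_tags, lifting) CollectI add_0 mult_zero_right)
  next
    fix z w assume "z \<in> {x + a * s | x s. x \<in> Q \<and> s \<in> A}" "w \<in> {x + a * s | x s. x \<in> Q \<and> s \<in> A}"
    then obtain x1 s1 x2 s2 where "z = x1 + a * s1" "x1 \<in> Q" "s1 \<in> A" "w = x2 + a * s2" "x2 \<in> Q" "s2 \<in> A" by blast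
    then have "z + w = (x1 + x2) + a * (s1 + s2)" "x1 + x2 \<in> Q" "s1 + s2 \<in> A"
      by (auto simp: algebra_simps intro: id_add[OF Q] sr_add[OF A])
    then show "z + w \<in> {x + a * s | x s. x \<in> Q \<and> s \<in> A}" by blast
  next
    fix b z assume b: "b \<in> A" and "z \<in> {x + a * s | x s. x \<in> Q \<and> s \<in> A}"
    then obtain x1 s1 where "z = x1 + a * s1" "x1 \<in> Q" "s1 \<in> A" by blast
    then have "b * z = b * x1 + a * (b * s1)" "b * x1 \<in> Q" "b * s1 \<in> A"
      using b by (auto simp: algebra_simps intro: id_multl[OF Q] sr_mult[OF A])
    then show "b * z \<in> {x + a * s | x s. x \<in> Q \<and> s \<in> A}" by blast
  qed
  show "Q \<subseteq> addid A Q a" unfolding addid_def using sr_0[OF A] by force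
  show "a \<in> addid A Q a" unfolding addid_def using sr_1[OF A] id_0[OF Q] by force
qed

lemma maxdisj_escape:
  assumes A: "subring A" and M: "maxdisj A J U Q" and a: "a \<in> A" "a \<notin> Q"
  shows "\<exists>x\<in>Q. \<exists>s\<in>A. x + a * s \<in> U"
proof (rule ccontr)
  assume "\<not> ?thesis"
  then have "addid A Q a \<inter> U = {}" unfolding addid_def by blast
  moreover have Q: "is_ideal A Q" using M maxdisj_def by blast
  ultimately have "addid A Q a = Q" using M addid_ideal[OF A Q a(1)] unfolding maxdisj_def by blast
  then show False using addid_ideal(3)[OF A Q a(1)] a(2) by blast
qed

lemma maxdisj_prime:
  assumes A: "subring A" and M: "maxdisj A J U Q" and U: "U \<subseteq> A" "1 \<in> U"
    and Um: "\<forall>u\<in>U. \<forall>v\<in>U. u * v \<in> U"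
  shows "is_prime A Q"
proof -
  have Q: "is_ideal A Q" and QU: "Q \<inter> U = {}" using M maxdisj_def by blast+
  have "Q \<noteq> A" using QU U by blast
  moreover have "\<forall>a\<in>A. \<forall>b\<in>A. a * b \<in> Q \<longrightarrow> a \<in> Q \<or> b \<in> Q"
  proof (intro ballI impI)
    fix a b assume a: "a \<in> A" and b: "b \<in> A" and ab: "a * b \<in> Q"
    show "a \<in> Q \<or> b \<in> Q"
    proof (rule ccontr)
      assume "\<not> (a \<in> Q \<or> b \<in> Q)"
      then obtain x1 s1 x2 s2 where 1: "x1 \<in> Q" "s1 \<in> A" "x1 + a * s1 \<in> U"
        and 2: "x2 \<in> Q" "s2 \<in> A" "x2 + b * s2 \<in> U"
        using maxdisj_escape[OF A M] a b by meson
      have "(x1 + a * s1) * (x2 + b * s2) = x1 * (x2 + b * s2) + x2 * (a * s1) + (a * b) * (s1 * s2)"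
        by (simp add: algebra_simps)
      also have "\<dots> \<in> Q"
      proof (intro id_add[OF Q])
        show "x1 * (x2 + b * s2) \<in> Q" using 2 U 1 by (intro id_multr[OF Q]) auto
        show "x2 * (a * s1) \<in> Q" using 2 1 a by (intro id_multr[OF Q] sr_mult[OF A]) auto
        show "(a * b) * (s1 * s2) \<in> Q" using ab 1 2 id_multr[OF Q sr_mult[OF A] ab, of s1 s2] by auto
      qed
      finally show False using Um 1 2 QU by blast
    qed
  qed
  ultimately show ?thesis unfolding is_prime_def using Q by blast
qed

lemma maximal_maxdisj: assumes "subring A" "is_maximal A M" shows "maxdisj A M {1} M"
  unfolding maxdisj_def
proof (intro conjI allI impI)
  show "is_ideal A M" using assms(2) is_maximal_def by blast
  show "M \<inter> {1} = {}" using assms id_one unfolding is_maximal_def by blast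
  fix I assume I: "is_ideal A I \<and> M \<subseteq> I \<and> I \<inter> {1} = {}"
  then have "I = M \<or> I = A" using assms(2) unfolding is_maximal_def by blast
  then show "I = M" using I sr_1[OF assms(1)] by blast
qed simp

lemma maxdisj_maximal: assumes "subring A" "maxdisj A J {1} M" shows "is_maximal A M"
  unfolding is_maximal_def
proof (intro conjI allI impI)
  show "is_ideal A M" using assms(2) maxdisj_def by blast
  show "M \<noteq> A" using assms sr_1 unfolding maxdisj_def by blast
  fix I assume I: "is_ideal A I \<and> M \<subseteq> I"
  show "I = M \<or> I = A"
  proof (cases "1 \<in> I")
    case True then show ?thesis using id_one I by blast
  next
    case False then show ?thesis using I assms(2) unfolding maxdisj_def by blast
  qed
qed

lemma maximal_prime: assumes "subring A" "is_maximal A M" shows "is_prime A M"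
  by (rule maxdisj_prime[OF assms(1) maximal_maxdisj[OF assms]]) (auto intro: sr_1[OF assms(1)])



lemma inv_integral:
  assumes R: "subring R" and t: "t \<in> R" "t \<noteq> 0"
    and c: "\<forall>i<n. c i \<in> R" and eq: "(1/t) ^ n + (\<Sum>i<n. c i * (1/t) ^ i) = 0"
  shows "1 / t \<in> R"
proof (cases n)
  case 0 then show ?thesis using eq by simp
next
  case (Suc m)
  define u where "u = 1 / t"
  have tu: "t * u = 1" using t(2) u_def by simp
  have tm: "\<And>i. i \<le> m \<Longrightarrow> t ^ m * u ^ i = t ^ (m - i)"
  proof -
    fix i assume "i \<le> m"
    then have "t ^ m = t ^ (m - i) * t ^ i" by (simp add: power_add[symmetric])
    then show "t ^ m * u ^ i = t ^ (m - i)"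
      by (simp add: mult.assoc power_mult_distrib[symmetric] tu)
  qed
  have "t ^ m * (u ^ n + (\<Sum>i<n. c i * u ^ i)) = 0" using eq u_def by simp
  moreover have "t ^ m * u ^ n = u"
  proof -
    have "t ^ m * u ^ n = u * (t ^ m * u ^ m)" using Suc by (simp add: algebra_simps)
    also have "\<dots> = u" using tm[of m] by simp
    finally show ?thesis .
  qed
  moreover have "t ^ m * (\<Sum>i<n. c i * u ^ i) = (\<Sum>i<n. c i * t ^ (m - i))"
    unfolding sum_distrib_left using tm Suc by (intro sum.cong) (auto simp: algebra_simps)
  ultimately have "u + (\<Sum>i<n. c i * t ^ (m - i)) = 0" by (simp only: distrib_left)
  then have "u = - (\<Sum>i<n. c i * t ^ (m - i))" by (simp add: eq_neg_iff_add_eq_0)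
  also have "\<dots> \<in> R" using c t
    by (intro sr_neg[OF R] sr_sum[OF R] sr_mult[OF R] sr_pow[OF R]) auto
  finally show ?thesis unfolding u_def .
qed

theorem proposition3p3:
  fixes R S :: "'k::field set"
  assumes "subring R"
    and "local_ring R"
    and "perinormal R"
    and "overring R S"
    and "integral_over R S"
    and "bij_betw (\<lambda>P. P \<inter> R) (Spec S) (Spec R)"
  shows "S = R"
proof -
  note R = assms(1)
  have S: "subring S" and RS: "R \<subseteq> S" using assms(4) overring_def by auto
  have ij: "inj_on (\<lambda>P. P \<inter> R) (Spec S)" and im: "(\<lambda>P. P \<inter> R) ` Spec S = Spec R"
    using assms(6) unfolding bij_betw_def by auto
  have inj: "P = Q" if "is_prime S P" "is_prime S Q" "P \<inter> R = Q \<inter> R" for P Q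
    using inj_onD[OF ij that(3)] that(1,2) unfolding Spec_def by simp
  have contr: "is_prime R (P \<inter> R)" if "is_prime S P" for P
  proof -
    have "P \<inter> R \<in> (\<lambda>P. P \<inter> R) ` Spec S" using that unfolding Spec_def by simp
    then show ?thesis using im unfolding Spec_def by simp
  qed
  have surj: "\<exists>P. is_prime S P \<and> P \<inter> R = p" if p: "is_prime R p" for p
  proof -
    have "p \<in> (\<lambda>P. P \<inter> R) ` Spec S" using im p unfolding Spec_def by simp
    then show ?thesis unfolding Spec_def by blast
  qed
  have integ: "\<And>s. s \<in> S \<Longrightarrow> \<exists>n c. (\<forall>i<n. c i \<in> R) \<and> s ^ n + (\<Sum>i<n. c i * s ^ i) = 0"
    using assms(5) integral_over_def by blast
  from assms(2) obtain m where m: "is_maximal R m" and mu: "\<And>M. is_maximal R M \<Longrightarrow> M = m"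
    unfolding local_ring_def by blast
  have mp: "is_prime R m" using maximal_prime[OF R m] .
  have proper_in_m: "\<And>J. is_ideal R J \<Longrightarrow> 1 \<notin> J \<Longrightarrow> J \<subseteq> m"
  proof -
    fix J assume "is_ideal R J" "1 \<notin> J"
    then obtain Q where "maxdisj R J {1} Q" using zorn_ideal[of R J "{1}"] by blast
    then have "is_maximal R Q" "J \<subseteq> Q" using maxdisj_maximal[OF R] maxdisj_def by blast+
    then show "J \<subseteq> m" using mu by blast
  qed
  have maxS_contr: "\<And>M. is_maximal S M \<Longrightarrow> M \<inter> R = m"
  proof -
    fix M assume M: "is_maximal S M"
    have Mp: "is_prime S M" using maximal_prime[OF S M] .
    have Mr: "is_prime R (M \<inter> R)" using contr[OF Mp] .
    have sub: "M \<inter> R \<subseteq> m" using proper_in_m pr_ideal[OF Mr] pr_one[OF Mr] by blast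
    moreover have "m \<subseteq> M \<inter> R"
    proof
      fix a assume a: "a \<in> m"
      have aR: "a \<in> R" using id_sub[OF pr_ideal[OF mp] a] .
      show "a \<in> M \<inter> R"
      proof (rule ccontr)
        assume "a \<notin> M \<inter> R"
        then have "a \<notin> M" using aR by blast
        then obtain x s where xs: "x \<in> M" "s \<in> S" "x + a * s \<in> {1}"
          using maxdisj_escape[OF S maximal_maxdisj[OF S M]] aR RS by blast
        obtain n c where "\<forall>i<n. c i \<in> R" "s ^ n + (\<Sum>i<n. c i * s ^ i) = 0" using integ xs(2) by blast
        moreover have "x + a * s \<in> R" using xs(3) sr_1[OF R] by simp
        ultimately have "x + a * s \<in> m"
          using key[OF S R RS pr_ideal[OF Mp] mp sub a xs(2) xs(1)] by blast
        then show False using xs(3) pr_one[OF mp] by auto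
      qed
    qed
    ultimately show "M \<inter> R = m" by blast
  qed
  have local: "local_ring S"
  proof -
    have "is_ideal S {0}" unfolding is_ideal_def using sr_0[OF S] by auto
    then obtain M0 where "maxdisj S {0} {1} M0" using zorn_ideal[of S "{0}" "{1}"] by auto
    then have M0: "is_maximal S M0" using maxdisj_maximal[OF S] by blast
    have "M = M0" if M: "is_maximal S M" for M
      using inj[OF maximal_prime[OF S M] maximal_prime[OF S M0]] maxS_contr[OF M] maxS_contr[OF M0] by simp
    then show ?thesis unfolding local_ring_def using M0 by blast
  qed
  have gd: "going_down R S"
    unfolding going_down_def
  proof (intro allI impI)
    fix p q Q assume H: "is_prime R p \<and> is_prime R q \<and> p \<subseteq> q \<and> is_prime S Q \<and> Q \<inter> R = q"
    then have p: "is_prime R p" and q: "is_prime R q" and pq: "p \<subseteq> q" and Q: "is_prime S Q"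
      and Qq: "Q \<inter> R = q" by auto
    obtain P where P: "is_prime S P" and Pp: "P \<inter> R = p" using surj[OF p] by blast
    define U where "U = R - q"
    have PU: "P \<inter> U = {}" using Pp pq U_def by blast
    obtain Q' where Q': "maxdisj S P U Q'" using zorn_ideal[OF pr_ideal[OF P] PU] by blast
    have US: "U \<subseteq> S" using U_def RS by blast
    have U1: "1 \<in> U" using U_def sr_1[OF R] pr_one[OF q] by blast
    have Um: "\<forall>u\<in>U. \<forall>v\<in>U. u * v \<in> U"
      using q sr_mult[OF R] unfolding U_def is_prime_def by blast
    have Q'p: "is_prime S Q'" using maxdisj_prime[OF S Q' US U1 Um] .
    have Q'I: "is_ideal S Q'" using Q' maxdisj_def by blast
    have sub: "Q' \<inter> R \<subseteq> q" using Q' unfolding maxdisj_def U_def by blast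
    have "q \<subseteq> Q' \<inter> R"
    proof
      fix a assume a: "a \<in> q"
      have aR: "a \<in> R" using id_sub[OF pr_ideal[OF q] a] .
      show "a \<in> Q' \<inter> R"
      proof (rule ccontr)
        assume "a \<notin> Q' \<inter> R"
        then have "a \<notin> Q'" using aR by blast
        then obtain x s where xs: "x \<in> Q'" "s \<in> S" "x + a * s \<in> U"
          using maxdisj_escape[OF S Q'] aR RS by blast
        obtain n c where "\<forall>i<n. c i \<in> R" "s ^ n + (\<Sum>i<n. c i * s ^ i) = 0" using integ xs(2) by blast
        moreover have "x + a * s \<in> R" using xs(3) U_def by simp
        ultimately have "x + a * s \<in> q"
          using key[OF S R RS Q'I q sub a xs(2) xs(1)] by blast
        then show False using xs(3) U_def by auto
      qed
    qed
    then have "Q' \<inter> R = Q \<inter> R" using sub Qq by blast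
    then have "Q' = Q" using inj[OF Q'p Q] by blast
    then have "P \<subseteq> Q" using Q' maxdisj_def by blast
    then show "\<exists>P. is_prime S P \<and> P \<subseteq> Q \<and> P \<inter> R = p" using P Pp by blast
  qed
  have "overring R S \<and> local_ring S \<and> going_down R S \<longrightarrow> is_localization R S"
    using assms(3) unfolding perinormal_def by (rule spec)
  then have "is_localization R S" using assms(4) local gd by blast
  then obtain T where T: "T \<subseteq> R" "0 \<notin> T" "1 \<in> T" and SD: "S = {r / t | r t. r \<in> R \<and> t \<in> T}"
    unfolding is_localization_def by blast
  have "S \<subseteq> R"
  proof
    fix z assume "z \<in> S"
    then obtain r t where z: "z = r / t" "r \<in> R" "t \<in> T" using SD by blast
    have tR: "t \<in> R" "t \<noteq> 0" using z T by auto
    have "1 / t \<in> S" using SD sr_1[OF R] z(3) by blast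
    then obtain n c where "\<forall>i<n. c i \<in> R" "(1/t) ^ n + (\<Sum>i<n. c i * (1/t) ^ i) = 0" using integ by blast
    then have "1 / t \<in> R" using inv_integral[OF R tR] by blast
    then have "r * (1 / t) \<in> R" using sr_mult[OF R z(2)] by blast
    then show "z \<in> R" using z by simp
  qed
  then show ?thesis using RS by blast
qed


end
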